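(* Let $\mathbb{S}=(S,\Sigma,\{\tau_a\mid a\in L\})$ be an LMP. Then $\sigma(\llbracket\mathcal{L}\rrbracket)\subseteq\mathcal{G}(\sigma(\llbracket\mathcal{L}\rrbracket))$ and $\mathcal{O}(\sim_e)\subseteq{\sim_e}$.
   Context: A labelled Markov process (LMP) is a triple $\mathbb{S}=(S,\Sigma,\{\tau_a\mid a\in L\})$ where $(S,\Sigma)$ is a measurable space, $L$ is a countable set of labels, and each $\tau_a:S\times\Sigma\to[0,1]$ is a Markov kernel: $\tau_a(s,\cdot)$ is a subprobability measure on $\Sigma$ for every $s$, and $\tau_a(\cdot,X)$ is $\Sigma$-measurable for every $X\in\Sigma$. For a relation $R\subseteq S\times S$, a set $A\subseteq S$ is $R$-closed if $x\in A$ and $xRs$ imply $s\in A$; $\Sigma(R)$ denotes the family of $R$-closed sets belonging to $\Sigma$. For $\Gamma\subseteq\mathcal{P}(S)$, $\mathcal{R}(\Gamma)=\{(s,t):\forall A\in\Gamma\ (s\in A\iff t\in A)\}$. For $\Lambda\subseteq\Sigma$, $\mathcal{R}^T(\Lambda)=\{(s,t):\forall a\in L\ \forall E\in\Lambda\ \tau_a(s,E)=\tau_a(t,E)\}$. Operators: $\mathcal{O}(R)=\mathcal{R}^T(\Sigma(R))$ for relations $R$ and $\mathcal{G}(\Lambda)=\Sigma(\mathcal{R}^T(\Lambda))$ for $\Lambda\subseteq\Sigma$. The logic $\mathcal{L}$ has formulas $\phi::=\top\mid\phi_1\wedge\phi_2\mid\langle a\rangle_{>q}\phi$ ($a\in L$,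 $q\in\mathbb{Q}\cap[0,1]$) with $\llbracket\top\rrbracket=S$, $\llbracket\phi\wedge\psi\rrbracket=\llbracket\phi\rrbracket\cap\llbracket\psi\rrbracket$, $\llbracket\langle a\rangle_{>q}\phi\rrbracket=\{s:\tau_a(s,\llbracket\phi\rrbracket)>q\}$; $\sigma(\llbracket\mathcal{L}\rrbracket)$ is the $\sigma$-algebra generated by all $\llbracket\phi\rrbracket$. Event bisimilarity is ${\sim_e}=\mathcal{R}(\sigma(\llbracket\mathcal{L}\rrbracket))$. *)

theory Defs
  imports "HOL-Probability.Probability"
begin

text \<open>The value tau_a(s,E) is  measure (tau a s) E.\<close>

definition LMP :: "'s measure \<Rightarrow> 'l set \<Rightarrow> ('l \<Rightarrow> 's \<Rightarrow> 's measure) \<Rightarrow> bool" where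
  "LMP M L tau \<longleftrightarrow> countable L \<and> (\<forall>a\<in>L. tau a \<in> M \<rightarrow>\<^sub>M subprob_algebra M)"

definition closed_sets :: "'s measure \<Rightarrow> ('s \<times> 's) set \<Rightarrow> 's set set" where
  "closed_sets M R = {A \<in> sets M. \<forall>x s. x \<in> A \<and> (x, s) \<in> R \<longrightarrow> s \<in> A}"

definition rel_of :: "'s measure \<Rightarrow> 's set set \<Rightarrow> ('s \<times> 's) set" where
  "rel_of M \<Gamma> = {(s, t). s \<in> space M \<and> t \<in> space M \<and> (\<forall>A\<in>\<Gamma>. s \<in> A \<longleftrightarrow> t \<in> A)}"

definition relT :: "'s measure \<Rightarrow> 'l set \<Rightarrow> ('l \<Rightarrow> 's \<Rightarrow> 's measure) \<Rightarrow> 's set set \<Rightarrow> ('s \<times> 's) set" where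
  "relT M L tau \<Lambda> = {(s, t). s \<in> space M \<and> t \<in> space M \<and>
      (\<forall>a\<in>L. \<forall>E\<in>\<Lambda>. measure (tau a s) E = measure (tau a t) E)}"

definition opO :: "'s measure \<Rightarrow> 'l set \<Rightarrow> ('l \<Rightarrow> 's \<Rightarrow> 's measure) \<Rightarrow> ('s \<times> 's) set \<Rightarrow> ('s \<times> 's) set" where
  "opO M L tau R = relT M L tau (closed_sets M R)"

definition opG :: "'s measure \<Rightarrow> 'l set \<Rightarrow> ('l \<Rightarrow> 's \<Rightarrow> 's measure) \<Rightarrow> 's set set \<Rightarrow> 's set set" where
  "opG M L tau \<Lambda> = closed_sets M (relT M L tau \<Lambda>)"

datatype 'l form = Top | Conj "'l form" "'l form" | Dia 'l rat "'l form"

fun wf_form :: "'l set \<Rightarrow> 'l form \<Rightarrow> bool" where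
  "wf_form L Top = True"
| "wf_form L (Conj f g) = (wf_form L f \<and> wf_form L g)"
| "wf_form L (Dia a q f) = (a \<in> L \<and> 0 \<le> q \<and> q \<le> 1 \<and> wf_form L f)"

fun sem :: "'s measure \<Rightarrow> ('l \<Rightarrow> 's \<Rightarrow> 's measure) \<Rightarrow> 'l form \<Rightarrow> 's set" where
  "sem M tau Top = space M"
| "sem M tau (Conj f g) = sem M tau f \<inter> sem M tau g"
| "sem M tau (Dia a q f) = {s \<in> space M. measure (tau a s) (sem M tau f) > real_of_rat q}"

definition sigmaL :: "'s measure \<Rightarrow> 'l set \<Rightarrow> ('l \<Rightarrow> 's \<Rightarrow> 's measure) \<Rightarrow> 's set set" where
  "sigmaL M L tau = sigma_sets (space M) {sem M tau f | f. wf_form L f}"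

definition event_bisim :: "'s measure \<Rightarrow> 'l set \<Rightarrow> ('l \<Rightarrow> 's \<Rightarrow> 's measure) \<Rightarrow> ('s \<times> 's) set" where
  "event_bisim M L tau = rel_of M (sigmaL M L tau)"

end

theory Submission
  imports Defs
begin

lemma sem_sets:
  assumes "LMP M L tau" "wf_form L f"
  shows "sem M tau f \<in> sets M"
  using assms(2)
proof (induction f)
  case Top then show ?case by simp
next
  case (Conj f g) then show ?case by auto
next
  case (Dia a q f)
  then have a: "a \<in> L" and f: "sem M tau f \<in> sets M" by auto
  have k: "tau a \<in> M \<rightarrow>\<^sub>M subprob_algebra M" using assms(1) a by (auto simp: LMP_def)
  have "(\<lambda>s. measure (tau a s) (sem M tau f)) \<in> borel_measurable M"
    using measurable_measure_subprob_algebra[OF f] k by (rule measurable_compose[rotated])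
  then have "{s \<in> space M. real_of_rat q < measure (tau a s) (sem M tau f)} \<in> sets M"
    by measurable
  then show ?case by simp
qed

lemma sem_sigmaL: "wf_form L f \<Longrightarrow> sem M tau f \<in> sigmaL M L tau"
  unfolding sigmaL_def by (rule sigma_sets.Basic) blast

lemma sigmaL_sets:
  assumes "LMP M L tau"
  shows "sigmaL M L tau \<subseteq> sets M"
  unfolding sigmaL_def
  by (rule sigma_algebra.sigma_sets_subset[OF sets.sigma_algebra_axioms]) (auto intro: sem_sets[OF assms])

lemma key:
  assumes st: "s \<in> space M" "t \<in> space M"
    and eq: "\<And>a f. a \<in> L \<Longrightarrow> wf_form L f \<Longrightarrow> measure (tau a s) (sem M tau f) = measure (tau a t) (sem M tau f)"
    and A: "A \<in> sigmaL M L tau"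
  shows "s \<in> A \<longleftrightarrow> t \<in> A"
proof -
  have base: "wf_form L f \<Longrightarrow> (s \<in> sem M tau f \<longleftrightarrow> t \<in> sem M tau f)" for f
    by (induction f) (use st eq in auto)
  from A show ?thesis unfolding sigmaL_def
  proof (induction rule: sigma_sets.induct)
    case (Basic a) then show ?case using base by auto
  next
    case Empty then show ?case by simp
  next
    case (Compl a) then show ?case using st by auto
  next
    case (Union A) then show ?case by auto
  qed
qed

theorem corollary3p5:
  fixes M :: "'s measure" and L :: "'l set" and tau :: "'l \<Rightarrow> 's \<Rightarrow> 's measure"
  assumes "LMP M L tau"
  shows "sigmaL M L tau \<subseteq> opG M L tau (sigmaL M L tau) \<and>
         opO M L tau (event_bisim M L tau) \<subseteq> event_bisim M L tau"
proof
  show "sigmaL M L tau \<subseteq> opG M L tau (sigmaL M L tau)"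
  proof
    fix A assume A: "A \<in> sigmaL M L tau"
    have "\<forall>x s. x \<in> A \<and> (x, s) \<in> relT M L tau (sigmaL M L tau) \<longrightarrow> s \<in> A"
    proof (intro allI impI)
      fix x s assume h: "x \<in> A \<and> (x, s) \<in> relT M L tau (sigmaL M L tau)"
      then have "x \<in> A \<longleftrightarrow> s \<in> A"
        by (intro key[OF _ _ _ A]) (auto simp: relT_def intro: sem_sigmaL)
      with h show "s \<in> A" by blast
    qed
    then show "A \<in> opG M L tau (sigmaL M L tau)"
      using A sigmaL_sets[OF assms] by (auto simp: opG_def closed_sets_def)
  qed
next
  show "opO M L tau (event_bisim M L tau) \<subseteq> event_bisim M L tau"
  proof
    fix p assume p: "p \<in> opO M L tau (event_bisim M L tau)"
    obtain s t where pst: "p = (s, t)" by (cases p)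
    have cl: "wf_form L f \<Longrightarrow> sem M tau f \<in> closed_sets M (event_bisim M L tau)" for f
      using sem_sets[OF assms] sem_sigmaL[of L f M tau]
      by (auto simp: closed_sets_def event_bisim_def rel_of_def)
    have st: "s \<in> space M" "t \<in> space M" and
      eq: "\<And>a f. a \<in> L \<Longrightarrow> wf_form L f \<Longrightarrow> measure (tau a s) (sem M tau f) = measure (tau a t) (sem M tau f)"
      using p cl by (auto simp: pst opO_def relT_def)
    have "\<forall>A\<in>sigmaL M L tau. s \<in> A \<longleftrightarrow> t \<in> A"
      using key[OF st eq] by blast
    then show "p \<in> event_bisim M L tau"
      using st by (simp add: pst event_bisim_def rel_of_def)
  qed
qed

end
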